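(* Let $\mathcal C$ be a full trio. If separability of languages of $\mathcal C$ by piecewise testable languages is decidable, then the simultaneous unboundedness problem is decidable for $\mathcal C$.
   Context: A full trio is a nonempty class of (effectively represented) languages effectively closed under $B$-projection, $B$-upward closure (for every finite alphabet $B$), and intersection with regular languages; equivalently, effectively closed under rational transductions. A piecewise testable language is a finite Boolean combination of languages $A^*a_1A^*\cdots A^*a_kA^*$; $I,E$ are separable by PTL if some piecewise testable $S$ has $I\subseteq S$, $S\cap E=\emptyset$. The SUP: given $L\subseteq b_1^*\cdots b_n^*$ in $\mathcal C$ ($b_1,\dots,b_n$ an enumeration of the alphabet), decide whether every tuple $(m,\dots,m)$ is componentwise dominated by the Parikh image of some word of $L$. *)

theory Defs
  imports Main "HOL-Library.Nat_Bijection" "HOL-Library.Sublist"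
begin

datatype recf = Zf | Sf | Proj nat | Cn recf "recf list" | Pr recf recf | Mn recf

inductive reval :: "recf \<Rightarrow> nat list \<Rightarrow> nat \<Rightarrow> bool" where
  reval_Z: "reval Zf xs 0"
| reval_S: "reval Sf (x # xs) (Suc x)"
| reval_Proj: "i < length xs \<Longrightarrow> reval (Proj i) xs (xs ! i)"
| reval_Cn: "list_all2 (\<lambda>g y. reval g xs y) gs ys \<Longrightarrow> reval f ys z \<Longrightarrow> reval (Cn f gs) xs z"
| reval_Pr0: "reval f xs y \<Longrightarrow> reval (Pr f g) (0 # xs) y"
| reval_PrS: "reval (Pr f g) (n # xs) y \<Longrightarrow> reval g (n # y # xs) z
              \<Longrightarrow> reval (Pr f g) (Suc n # xs) z"
| reval_Mn: "reval f (n # xs) 0 \<Longrightarrow> (\<forall>m<n. \<exists>k. reval f (m # xs) (Suc k))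
              \<Longrightarrow> reval (Mn f) xs n"

definition computable1 :: "(nat \<Rightarrow> nat) \<Rightarrow> bool" where
  "computable1 f \<longleftrightarrow> (\<exists>p. \<forall>x. reval p [x] (f x))"

definition computable2 :: "(nat \<Rightarrow> nat \<Rightarrow> nat) \<Rightarrow> bool" where
  "computable2 f \<longleftrightarrow> (\<exists>p. \<forall>x y. reval p [x, y] (f x y))"

text \<open>Letters are natural numbers, words are nat lists (encoded by list_encode),
  finite alphabets are finite sets of nats (encoded by set_encode).\<close>

datatype rexp = RZero | ROne | RAtom nat | RPlus rexp rexp | RTimes rexp rexp | RStar rexp

definition conc :: "nat list set \<Rightarrow> nat list set \<Rightarrow> nat list set" where
  "conc A B = {u @ v | u v. u \<in> A \<and> v \<in> B}"

inductive_set kstar :: "nat list set \<Rightarrow> nat list set" for A where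
  kstar_Nil: "[] \<in> kstar A"
| kstar_app: "u \<in> A \<Longrightarrow> v \<in> kstar A \<Longrightarrow> u @ v \<in> kstar A"

primrec rlang :: "rexp \<Rightarrow> nat list set" where
  "rlang RZero = {}"
| "rlang ROne = {[]}"
| "rlang (RAtom a) = {[a]}"
| "rlang (RPlus r s) = rlang r \<union> rlang s"
| "rlang (RTimes r s) = conc (rlang r) (rlang s)"
| "rlang (RStar r) = kstar (rlang r)"

primrec rexp_encode :: "rexp \<Rightarrow> nat" where
  "rexp_encode RZero = prod_encode (0, 0)"
| "rexp_encode ROne = prod_encode (1, 0)"
| "rexp_encode (RAtom a) = prod_encode (2, a)"
| "rexp_encode (RPlus r s) = prod_encode (3, prod_encode (rexp_encode r, rexp_encode s))"
| "rexp_encode (RTimes r s) = prod_encode (4, prod_encode (rexp_encode r, rexp_encode s))"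
| "rexp_encode (RStar r) = prod_encode (5, rexp_encode r)"

definition proj :: "nat set \<Rightarrow> nat list set \<Rightarrow> nat list set" where
  "proj B L = (filter (\<lambda>x. x \<in> B)) ` L"

definition upclose :: "nat set \<Rightarrow> nat list set \<Rightarrow> nat list set" where
  "upclose B L = {v. \<exists>u\<in>L. \<exists>w\<in>lists B. v \<in> shuffles u w}"

text \<open>A class of languages is given effectively by a set D of descriptions (codes)
  and a semantics sem mapping a description to the language it describes.\<close>

definition full_trio :: "nat set \<Rightarrow> (nat \<Rightarrow> nat list set) \<Rightarrow> bool" where
  "full_trio D sem \<longleftrightarrow>
     D \<noteq> {}
   \<and> (\<forall>d\<in>D. \<exists>X. finite X \<and> sem d \<subseteq> lists X)
   \<and> (\<exists>F. computable2 F \<and> (\<forall>d\<in>D. \<forall>B. finite B \<longrightarrow>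
          F d (set_encode B) \<in> D \<and> sem (F d (set_encode B)) = proj B (sem d)))
   \<and> (\<exists>F. computable2 F \<and> (\<forall>d\<in>D. \<forall>B. finite B \<longrightarrow>
          F d (set_encode B) \<in> D \<and> sem (F d (set_encode B)) = upclose B (sem d)))
   \<and> (\<exists>F. computable2 F \<and> (\<forall>d\<in>D. \<forall>r.
          F d (rexp_encode r) \<in> D \<and> sem (F d (rexp_encode r)) = sem d \<inter> rlang r))"

inductive piecewise_testable :: "nat set \<Rightarrow> nat list set \<Rightarrow> bool" for A where
  pt_basic: "set u \<subseteq> A \<Longrightarrow> piecewise_testable A {w \<in> lists A. subseq u w}"
| pt_compl: "piecewise_testable A S \<Longrightarrow> piecewise_testable A (lists A - S)"
| pt_union: "piecewise_testable A S \<Longrightarrow> piecewise_testable A T \<Longrightarrow> piecewise_testable A (S \<union> T)"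

definition PTL_separable :: "nat list set \<Rightarrow> nat list set \<Rightarrow> bool" where
  "PTL_separable I E \<longleftrightarrow>
     (\<exists>A S. finite A \<and> piecewise_testable A S \<and> I \<subseteq> S \<and> S \<inter> E = {})"

definition PTL_separability_decidable :: "nat set \<Rightarrow> (nat \<Rightarrow> nat list set) \<Rightarrow> bool" where
  "PTL_separability_decidable D sem \<longleftrightarrow>
     (\<exists>f. computable2 f \<and> (\<forall>d1\<in>D. \<forall>d2\<in>D.
        f d1 d2 = (if PTL_separable (sem d1) (sem d2) then 1 else 0)))"

text \<open>b1* b2* ... bn*\<close>
definition bounded_lang :: "nat list \<Rightarrow> nat list set" where
  "bounded_lang bs = {concat (map (\<lambda>(b, k). replicate k b) (zip bs ks)) | ks.
                       length ks = length bs}"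

definition simult_unbounded :: "nat list \<Rightarrow> nat list set \<Rightarrow> bool" where
  "simult_unbounded bs L \<longleftrightarrow>
     (\<forall>m. \<exists>w\<in>L. \<forall>i<length bs. m \<le> count_list w (bs ! i))"

text \<open>SUP is a promise problem: inputs are a description d and an enumeration bs
  (encoded by list_encode) of the alphabet with sem d contained in b1*...bn*.\<close>
definition SUP_decidable :: "nat set \<Rightarrow> (nat \<Rightarrow> nat list set) \<Rightarrow> bool" where
  "SUP_decidable D sem \<longleftrightarrow>
     (\<exists>f. computable2 f \<and> (\<forall>d\<in>D. \<forall>bs. distinct bs \<longrightarrow> sem d \<subseteq> bounded_lang bs \<longrightarrow>
        f d (list_encode bs) = (if simult_unbounded bs (sem d) then 1 else 0)))"

end

theory Submission
  imports Defs
begin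


definition rf :: "recf \<Rightarrow> (nat list \<Rightarrow> nat) \<Rightarrow> nat \<Rightarrow> bool" where
  "rf p F k \<longleftrightarrow> (\<forall>xs. length xs = k \<longrightarrow> reval p xs (F xs))"

lemma rfI: "(\<And>xs. length xs = k \<Longrightarrow> reval p xs (F xs)) \<Longrightarrow> rf p F k"
  by (simp add: rf_def)

lemma rfD: "rf p F k \<Longrightarrow> length xs = k \<Longrightarrow> reval p xs (F xs)"
  by (simp add: rf_def)

lemma rf_eq: "rf p F k \<Longrightarrow> k = k' \<Longrightarrow> (\<And>xs. length xs = k' \<Longrightarrow> F xs = H xs) \<Longrightarrow> rf p H k'"
  by (simp add: rf_def)

lemma rf_Z: "rf Zf (\<lambda>_. 0) k"
  by (simp add: rf_def reval_Z)

lemma rf_Proj: "i < k \<Longrightarrow> rf (Proj i) (\<lambda>xs. xs ! i) k"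
  by (simp add: rf_def reval_Proj)

lemma rf_S: "rf Sf (\<lambda>xs. Suc (xs ! 0)) (Suc 0)"
  unfolding rf_def
proof (intro allI impI)
  fix xs :: "nat list" assume "length xs = Suc 0"
  then obtain a where "xs = [a]" by (cases xs) auto
  then show "reval Sf xs (Suc (xs ! 0))" by (simp add: reval_S)
qed

lemma rf_Cn: "rf f F m \<Longrightarrow> list_all2 (\<lambda>g G. rf g G k) gs Gs \<Longrightarrow> length gs = m
  \<Longrightarrow> rf (Cn f gs) (\<lambda>xs. F (map (\<lambda>G. G xs) Gs)) k"
  unfolding rf_def
proof (intro allI impI)
  fix xs :: "nat list"
  assume f: "\<forall>xs. length xs = m \<longrightarrow> reval f xs (F xs)"
    and g: "list_all2 (\<lambda>g G. \<forall>xs. length xs = k \<longrightarrow> reval g xs (G xs)) gs Gs"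
    and l: "length gs = m" and x: "length xs = k"
  have "list_all2 (\<lambda>g y. reval g xs y) gs (map (\<lambda>G. G xs) Gs)"
    using g x by (auto simp: list_all2_conv_all_nth)
  moreover have "length (map (\<lambda>G. G xs) Gs) = m" using g l by (simp add: list_all2_lengthD)
  ultimately show "reval (Cn f gs) xs (F (map (\<lambda>G. G xs) Gs))"
    using f by (blast intro: reval_Cn)
qed

lemma rf_Cn1: "rf f F (Suc 0) \<Longrightarrow> rf g G k \<Longrightarrow> rf (Cn f [g]) (\<lambda>xs. F [G xs]) k"
  using rf_Cn[of f F "Suc 0" k "[g]" "[G]"] by simp

lemma rf_Cn2: "rf f F (Suc (Suc 0)) \<Longrightarrow> rf g G k \<Longrightarrow> rf h H k \<Longrightarrow> rf (Cn f [g, h]) (\<lambda>xs. F [G xs, H xs]) k"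
  using rf_Cn[of f F "Suc (Suc 0)" k "[g, h]" "[G, H]"] by simp

lemma rf_Cn3: "rf f F (Suc (Suc (Suc 0))) \<Longrightarrow> rf g G k \<Longrightarrow> rf h H k \<Longrightarrow> rf i I k
   \<Longrightarrow> rf (Cn f [g, h, i]) (\<lambda>xs. F [G xs, H xs, I xs]) k"
  using rf_Cn[of f F "Suc (Suc (Suc 0))" k "[g, h, i]" "[G, H, I]"] by simp

primrec precf :: "(nat list \<Rightarrow> nat) \<Rightarrow> (nat list \<Rightarrow> nat) \<Rightarrow> nat \<Rightarrow> nat list \<Rightarrow> nat" where
  "precf F G 0 xs = F xs"
| "precf F G (Suc n) xs = G (n # precf F G n xs # xs)"

lemma rf_Pr: "rf f F k \<Longrightarrow> rf g G (Suc (Suc k)) \<Longrightarrow> rf (Pr f g) (\<lambda>xs. precf F G (hd xs) (tl xs)) (Suc k)"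
  unfolding rf_def
proof (intro allI impI)
  fix xs :: "nat list"
  assume f: "\<forall>xs. length xs = k \<longrightarrow> reval f xs (F xs)"
    and g: "\<forall>xs. length xs = Suc (Suc k) \<longrightarrow> reval g xs (G xs)"
    and x: "length xs = Suc k"
  then obtain n ys where xs: "xs = n # ys" and ys: "length ys = k" by (cases xs) auto
  have "reval (Pr f g) (n # ys) (precf F G n ys)"
  proof (induction n)
    case 0 then show ?case using f ys by (simp add: reval_Pr0)
  next
    case (Suc n)
    have "reval g (n # precf F G n ys # ys) (G (n # precf F G n ys # ys))" using g ys by simp
    with Suc show ?case by (simp add: reval_PrS)
  qed
  then show "reval (Pr f g) xs (precf F G (hd xs) (tl xs))" by (simp add: xs)
qed

lemma rf_Mn: "rf f F (Suc k) \<Longrightarrow> (\<And>xs. length xs = k \<Longrightarrow> \<exists>n. F (n # xs) = 0)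
  \<Longrightarrow> rf (Mn f) (\<lambda>xs. LEAST n. F (n # xs) = 0) k"
  unfolding rf_def
proof (intro allI impI)
  fix xs :: "nat list"
  assume f: "\<forall>xs. length xs = Suc k \<longrightarrow> reval f xs (F xs)"
    and ex: "\<And>xs. length xs = k \<Longrightarrow> \<exists>n. F (n # xs) = 0" and x: "length xs = k"
  define n where "n = (LEAST n. F (n # xs) = 0)"
  have n0: "F (n # xs) = 0" using ex[OF x] unfolding n_def by (rule exE) (rule LeastI)
  have "\<forall>m<n. \<exists>j. reval f (m # xs) (Suc j)"
  proof (intro allI impI)
    fix m assume "m < n"
    then have "F (m # xs) \<noteq> 0" unfolding n_def using not_less_Least by blast
    then obtain j where "F (m # xs) = Suc j" using not0_implies_Suc by blast
    then show "\<exists>j. reval f (m # xs) (Suc j)" using f x by (metis length_Cons)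
  qed
  moreover have "reval f (n # xs) 0" using f x n0 by (metis length_Cons)
  ultimately show "reval (Mn f) xs (LEAST n. F (n # xs) = 0)"
    using reval_Mn n_def by blast
qed

primrec cprog :: "nat \<Rightarrow> recf" where
  "cprog 0 = Zf"
| "cprog (Suc n) = Cn Sf [cprog n]"

lemma rf_const: "rf (cprog n) (\<lambda>_. n) k"
  by (induction n) (auto intro: rf_Z intro!: rf_eq[OF rf_Cn1[OF rf_S]])

lemma rf_P0: "rf (Proj 0) (\<lambda>xs. xs ! 0) (Suc k)" by (rule rf_Proj) simp
lemma rf_P1: "rf (Proj 1) (\<lambda>xs. xs ! 1) (Suc (Suc k))" by (rule rf_Proj) simp
lemma rf_P2: "rf (Proj 2) (\<lambda>xs. xs ! 2) (Suc (Suc (Suc k)))" by (rule rf_Proj) simp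

lemma len1: "length xs = Suc 0 \<Longrightarrow> \<exists>a. xs = [a]"
  by (cases xs) auto
lemma len2: "length xs = Suc (Suc 0) \<Longrightarrow> \<exists>a b. xs = [a, b]"
  by (cases xs; cases "tl xs") auto

definition "p_add = Pr (Proj 0) (Cn Sf [Proj 1])"

lemma rf_add: "rf p_add (\<lambda>xs. xs ! 0 + xs ! 1) (Suc (Suc 0))"
  unfolding p_add_def
  apply (rule rf_eq[OF rf_Pr[OF rf_P0 rf_Cn1[OF rf_S rf_P1]]])
   apply simp
  apply (drule len2)
  apply (elim exE)
  subgoal for xs a b by (hypsubst_thin, induct a) auto
  done

definition "p_mult = Pr Zf (Cn p_add [Proj 1, Proj 2])"

lemma rf_mult: "rf p_mult (\<lambda>xs. xs ! 0 * xs ! 1) (Suc (Suc 0))"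
  unfolding p_mult_def
  apply (rule rf_eq[OF rf_Pr[OF rf_Z rf_Cn2[OF rf_add rf_P1 rf_P2]]])
   apply simp
  apply (drule len2)
  apply (elim exE)
  subgoal for xs a b by (hypsubst_thin, induct a) auto
  done

definition "p_pred = Pr Zf (Proj 0)"

lemma rf_pred: "rf p_pred (\<lambda>xs. xs ! 0 - 1) (Suc 0)"
  unfolding p_pred_def
  apply (rule rf_eq[OF rf_Pr[OF rf_Z rf_P0]])
   apply simp
  apply (drule len1)
  apply (elim exE)
  subgoal for xs a by (hypsubst_thin, induct a) auto
  done

definition "p_subr = Pr (Proj 0) (Cn p_pred [Proj 1])"
definition "p_monus = Cn p_subr [Proj 1, Proj 0]"

lemma rf_subr: "rf p_subr (\<lambda>xs. xs ! 1 - xs ! 0) (Suc (Suc 0))"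
  unfolding p_subr_def
  apply (rule rf_eq[OF rf_Pr[OF rf_P0 rf_Cn1[OF rf_pred rf_P1]]])
   apply simp
  apply (drule len2)
  apply (elim exE)
  subgoal for xs a b by (hypsubst_thin, induct a) auto
  done

lemma rf_monus: "rf p_monus (\<lambda>xs. xs ! 0 - xs ! 1) (Suc (Suc 0))"
  unfolding p_monus_def
  by (rule rf_eq[OF rf_Cn2[OF rf_subr rf_P1 rf_P0]]) auto

definition "p_exp2 = Pr (cprog 1) (Cn p_add [Proj 1, Proj 1])"

lemma rf_exp2: "rf p_exp2 (\<lambda>xs. 2 ^ (xs ! 0)) (Suc 0)"
  unfolding p_exp2_def
  apply (rule rf_eq[OF rf_Pr[OF rf_const rf_Cn2[OF rf_add rf_P1 rf_P1]]])
   apply simp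
  apply (drule len1)
  apply (elim exE)
  subgoal for xs a by (hypsubst_thin, induct a) auto
  done

definition "p_tri = Pr Zf (Cn Sf [Cn p_add [Proj 1, Proj 0]])"

lemma rf_tri: "rf p_tri (\<lambda>xs. triangle (xs ! 0)) (Suc 0)"
  unfolding p_tri_def
  apply (rule rf_eq[OF rf_Pr[OF rf_Z rf_Cn1[OF rf_S rf_Cn2[OF rf_add rf_P1 rf_P0]]]])
   apply simp
  apply (drule len1)
  apply (elim exE)
  subgoal for xs a by (hypsubst_thin, induct a) auto
  done

definition "p_penc = Cn p_add [Cn p_tri [Cn p_add [Proj 0, Proj 1]], Proj 0]"

lemma rf_penc: "rf p_penc (\<lambda>xs. prod_encode (xs ! 0, xs ! 1)) (Suc (Suc 0))"
  unfolding p_penc_def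
  by (rule rf_eq[OF rf_Cn2[OF rf_add rf_Cn1[OF rf_tri rf_Cn2[OF rf_add rf_P0 rf_P1]] rf_P0]])
     (auto simp: prod_encode_def)


definition "p_sh = Cn p_monus [cprog 1, Cn p_monus [Cn p_tri [Cn Sf [Proj 0]], Proj 1]]"

lemma rf_sh: "rf p_sh (\<lambda>xs. 1 - (triangle (Suc (xs ! 0)) - xs ! 1)) (Suc (Suc 0))"
  unfolding p_sh_def
  by (rule rf_eq[OF rf_Cn2[OF rf_monus rf_const rf_Cn2[OF rf_monus rf_Cn1[OF rf_tri rf_Cn1[OF rf_S rf_P0]] rf_P1]]])
     auto

definition sfun :: "nat \<Rightarrow> nat" where "sfun z = (LEAST s. z < triangle (Suc s))"

lemma tri_ge: "n \<le> triangle n"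
  by (induct n) auto

lemma sh_iff: "(1 - (triangle (Suc s) - z) = (0::nat)) \<longleftrightarrow> z < triangle (Suc s)"
  by auto

definition "p_s = Mn p_sh"

lemma rf_s: "rf p_s (\<lambda>xs. sfun (xs ! 0)) (Suc 0)"
  unfolding p_s_def
  apply (rule rf_eq[OF rf_Mn[OF rf_sh]])
    apply (drule len1)
    apply (elim exE)
  subgoal for xs a
    using tri_ge[of "Suc a"] by (intro exI[of _ a]) auto
   apply simp
  apply (simp add: sfun_def)
  apply (rule arg_cong[where f=Least])
  apply (rule ext)
  apply arith
  done


lemma sfun_props: "triangle (sfun z) \<le> z \<and> z < triangle (sfun z) + Suc (sfun z)"
proof -
  have ex: "z < triangle (Suc z)" using tri_ge[of "Suc z"] by simp
  have 1: "z < triangle (Suc (sfun z))" unfolding sfun_def by (rule LeastI[of "\<lambda>s. z < triangle (Suc s)", OF ex])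
  have 2: "triangle (sfun z) \<le> z"
  proof (cases "sfun z")
    case 0 then show ?thesis by simp
  next
    case (Suc s)
    then have "s < (LEAST s. z < triangle (Suc s))" unfolding sfun_def by simp
    then have "\<not> z < triangle (Suc s)" by (rule not_less_Least)
    then show ?thesis using Suc by simp
  qed
  from 1 2 show ?thesis by simp
qed

lemma prod_decode_sfun: "prod_decode z = (z - triangle (sfun z), sfun z - (z - triangle (sfun z)))"
proof -
  let ?s = "sfun z"
  let ?a = "z - triangle ?s"
  have "prod_encode (?a, ?s - ?a) = z"
    using sfun_props[of z] by (simp add: prod_encode_def)
  then show ?thesis by (metis prod_encode_inverse)
qed

definition "p_pd1 = Cn p_monus [Proj 0, Cn p_tri [p_s]]"
definition "p_pd2 = Cn p_monus [p_s, p_pd1]"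

lemma rf_pd1: "rf p_pd1 (\<lambda>xs. fst (prod_decode (xs ! 0))) (Suc 0)"
  unfolding p_pd1_def
  by (rule rf_eq[OF rf_Cn2[OF rf_monus rf_P0 rf_Cn1[OF rf_tri rf_s]]])
     (auto simp: prod_decode_sfun)

lemma rf_pd2: "rf p_pd2 (\<lambda>xs. snd (prod_decode (xs ! 0))) (Suc 0)"
  unfolding p_pd2_def
  by (rule rf_eq[OF rf_Cn2[OF rf_monus rf_s rf_pd1]])
     (auto simp: prod_decode_sfun)

definition tlf :: "nat \<Rightarrow> nat" where "tlf t = snd (prod_decode (t - 1))"
definition hdf :: "nat \<Rightarrow> nat" where "hdf t = fst (prod_decode (t - 1))"

lemma prod_decode_0: "prod_decode 0 = (0, 0)"
proof -
  have "prod_encode (0, 0) = 0" by (simp add: prod_encode_def)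
  then show ?thesis by (metis prod_encode_inverse)
qed

lemma tlf_enc: "tlf (list_encode xs) = list_encode (tl xs)"
  by (cases xs) (auto simp: tlf_def prod_decode_0)

lemma hdf_enc: "xs \<noteq> [] \<Longrightarrow> hdf (list_encode xs) = hd xs"
  by (cases xs) (auto simp: hdf_def)


definition "p_T = Pr (Proj 0) (Cn p_pd2 [Cn p_pred [Proj 1]])"

lemma rf_T: "rf p_T (\<lambda>xs. (tlf ^^ (xs ! 0)) (xs ! 1)) (Suc (Suc 0))"
  unfolding p_T_def
  apply (rule rf_eq[OF rf_Pr[OF rf_P0 rf_Cn1[OF rf_pd2 rf_Cn1[OF rf_pred rf_P1]]]])
   apply simp
  apply (drule len2)
  apply (elim exE)
  subgoal for xs a b by (hypsubst_thin, induct a) (auto simp: tlf_def)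
  done

lemma T_enc: "(tlf ^^ i) (list_encode xs) = list_encode (drop i xs)"
  by (induct i) (auto simp: tlf_enc drop_Suc tl_drop)

definition "p_nth = Cn p_pd1 [Cn p_pred [p_T]]"

lemma rf_nth: "rf p_nth (\<lambda>xs. hdf ((tlf ^^ (xs ! 0)) (xs ! 1))) (Suc (Suc 0))"
  unfolding p_nth_def
  by (rule rf_eq[OF rf_Cn1[OF rf_pd1 rf_Cn1[OF rf_pred rf_T]]]) (auto simp: hdf_def)

lemma nth_enc: "i < length xs \<Longrightarrow> hdf ((tlf ^^ i) (list_encode xs)) = xs ! i"
  by (simp add: T_enc hdf_enc hd_drop_conv_nth)

definition lenf :: "nat \<Rightarrow> nat" where "lenf x = (LEAST i. (tlf ^^ i) x = 0)"

definition "p_len = Mn p_T"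

lemma rf_len: "rf p_len (\<lambda>xs. lenf (xs ! 0)) (Suc 0)"
  unfolding p_len_def
  apply (rule rf_eq[OF rf_Mn[OF rf_T]])
    apply (drule len1)
    apply (elim exE)
  subgoal for xs a
    using T_enc[of "length (list_decode a)" "list_decode a"] by (intro exI[of _ "length (list_decode a)"]) auto
   apply simp
  apply (simp add: lenf_def)
  done

lemma enc0: "list_encode ys = 0 \<longleftrightarrow> ys = []"
  by (cases ys) auto

lemma len_enc: "lenf (list_encode xs) = length xs"
proof -
  have "(tlf ^^ i) (list_encode xs) = 0 \<longleftrightarrow> length xs \<le> i" for i
    using enc0[of "drop i xs"] by (simp add: T_enc)
  then show ?thesis unfolding lenf_def
    by (intro Least_equality) auto
qed


definition blkI :: "nat \<Rightarrow> nat \<Rightarrow> rexp" where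
  "blkI b c = RStar (RTimes (RAtom b) (RAtom c))"
definition blkE :: "nat \<Rightarrow> nat \<Rightarrow> rexp" where
  "blkE b c = RTimes (blkI b c) (RAtom b)"

primrec RIx :: "nat \<Rightarrow> (nat \<Rightarrow> nat) \<Rightarrow> nat \<Rightarrow> rexp" where
  "RIx x f 0 = ROne"
| "RIx x f (Suc j) = RTimes (RIx x f j) (blkI (f j) (x + j))"

primrec REx :: "nat \<Rightarrow> (nat \<Rightarrow> nat) \<Rightarrow> nat \<Rightarrow> rexp" where
  "REx x f 0 = ROne"
| "REx x f (Suc j) = RTimes (REx x f j) (blkE (f j) (x + j))"

definition nthf :: "nat \<Rightarrow> nat \<Rightarrow> nat" where "nthf x i = hdf ((tlf ^^ i) x)"

definition "p_bI = Cn p_penc [cprog 5, Cn p_penc [cprog 4, Cn p_penc [Cn p_penc [cprog 2, Proj 0], Cn p_penc [cprog 2, Proj 1]]]]"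

lemma rf_bI: "rf p_bI (\<lambda>xs. rexp_encode (blkI (xs ! 0) (xs ! 1))) (Suc (Suc 0))"
  unfolding p_bI_def
  by (rule rf_eq[OF rf_Cn2[OF rf_penc rf_const rf_Cn2[OF rf_penc rf_const rf_Cn2[OF rf_penc
       rf_Cn2[OF rf_penc rf_const rf_P0] rf_Cn2[OF rf_penc rf_const rf_P1]]]]])
     (auto simp: blkI_def)

definition "p_bE = Cn p_penc [cprog 4, Cn p_penc [p_bI, Cn p_penc [cprog 2, Proj 0]]]"

lemma rf_bE: "rf p_bE (\<lambda>xs. rexp_encode (blkE (xs ! 0) (xs ! 1))) (Suc (Suc 0))"
  unfolding p_bE_def
  by (rule rf_eq[OF rf_Cn2[OF rf_penc rf_const rf_Cn2[OF rf_penc rf_bI rf_Cn2[OF rf_penc rf_const rf_P0]]]])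
     (auto simp: blkE_def)

definition "p_RIp = Pr (cprog (rexp_encode ROne))
   (Cn p_penc [cprog 4, Cn p_penc [Proj 1, Cn p_bI [Cn p_nth [Proj 0, Proj 2], Cn p_add [Proj 2, Proj 0]]]])"

lemma rf_RIp: "rf p_RIp (\<lambda>xs. rexp_encode (RIx (xs ! 1) (nthf (xs ! 1)) (xs ! 0))) (Suc (Suc 0))"
  unfolding p_RIp_def
  apply (rule rf_eq[OF rf_Pr[OF rf_const rf_Cn2[OF rf_penc rf_const rf_Cn2[OF rf_penc rf_P1
           rf_Cn2[OF rf_bI rf_Cn2[OF rf_nth rf_P0 rf_P2] rf_Cn2[OF rf_add rf_P2 rf_P0]]]]]])
   apply simp
  apply (drule len2)
  apply (elim exE)
  subgoal for xs a b by (hypsubst_thin, induct a) (auto simp: nthf_def)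
  done

definition "p_REp = Pr (cprog (rexp_encode ROne))
   (Cn p_penc [cprog 4, Cn p_penc [Proj 1, Cn p_bE [Cn p_nth [Proj 0, Proj 2], Cn p_add [Proj 2, Proj 0]]]])"

lemma rf_REp: "rf p_REp (\<lambda>xs. rexp_encode (REx (xs ! 1) (nthf (xs ! 1)) (xs ! 0))) (Suc (Suc 0))"
  unfolding p_REp_def
  apply (rule rf_eq[OF rf_Pr[OF rf_const rf_Cn2[OF rf_penc rf_const rf_Cn2[OF rf_penc rf_P1
           rf_Cn2[OF rf_bE rf_Cn2[OF rf_nth rf_P0 rf_P2] rf_Cn2[OF rf_add rf_P2 rf_P0]]]]]])
   apply simp
  apply (drule len2)
  apply (elim exE)
  subgoal for xs a b by (hypsubst_thin, induct a) (auto simp: nthf_def)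
  done

definition "p_RI = Cn p_RIp [p_len, Proj 0]"
definition "p_RE = Cn p_REp [p_len, Proj 0]"

lemma rf_RI: "rf p_RI (\<lambda>xs. rexp_encode (RIx (xs ! 0) (nthf (xs ! 0)) (lenf (xs ! 0)))) (Suc 0)"
  unfolding p_RI_def by (rule rf_eq[OF rf_Cn2[OF rf_RIp rf_len rf_P0]]) auto

lemma rf_RE: "rf p_RE (\<lambda>xs. rexp_encode (REx (xs ! 0) (nthf (xs ! 0)) (lenf (xs ! 0)))) (Suc 0)"
  unfolding p_RE_def by (rule rf_eq[OF rf_Cn2[OF rf_REp rf_len rf_P0]]) auto

definition "p_setC = Cn p_monus [Cn p_exp2 [Cn p_add [Proj 0, p_len]], Cn p_exp2 [Proj 0]]"
definition "p_setA = Cn p_monus [Cn p_exp2 [Cn p_add [Proj 0, p_len]], cprog 1]"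

lemma rf_setC: "rf p_setC (\<lambda>xs. 2 ^ (xs ! 0 + lenf (xs ! 0)) - 2 ^ (xs ! 0)) (Suc 0)"
  unfolding p_setC_def
  by (rule rf_eq[OF rf_Cn2[OF rf_monus rf_Cn1[OF rf_exp2 rf_Cn2[OF rf_add rf_P0 rf_len]] rf_Cn1[OF rf_exp2 rf_P0]]]) auto

lemma rf_setA: "rf p_setA (\<lambda>xs. 2 ^ (xs ! 0 + lenf (xs ! 0)) - 1) (Suc 0)"
  unfolding p_setA_def
  by (rule rf_eq[OF rf_Cn2[OF rf_monus rf_Cn1[OF rf_exp2 rf_Cn2[OF rf_add rf_P0 rf_len]] rf_const]]) auto

lemma rf_comp2: "computable2 F \<Longrightarrow> \<exists>p. rf p (\<lambda>xs. F (xs ! 0) (xs ! 1)) (Suc (Suc 0))"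
  unfolding computable2_def
  apply (elim exE)
  subgoal for p
    apply (rule exI[of _ p])
    apply (rule rfI)
    apply (drule len2)
    apply auto
    done
  done

lemma rf_comp2_back: "rf p (\<lambda>xs. F (xs ! 0) (xs ! 1)) (Suc (Suc 0)) \<Longrightarrow> computable2 F"
  unfolding computable2_def
  apply (rule exI[of _ p])
  apply (auto dest: rfD[where xs="[_, _]"])
  done


lemma main_computable:
  assumes "computable2 Fi" "computable2 Fu" "computable2 Fp" "computable2 G"
  shows "computable2 (\<lambda>d x. 1 - G (Fi (Fu d (2 ^ (x + lenf x) - 2 ^ x)) (rexp_encode (RIx x (nthf x) (lenf x))))
                            (Fi (Fu (Fp d 0) (2 ^ (x + lenf x) - 1)) (rexp_encode (REx x (nthf x) (lenf x)))))"
proof -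
  obtain pi where i: "rf pi (\<lambda>xs. Fi (xs ! 0) (xs ! 1)) (Suc (Suc 0))" using rf_comp2[OF assms(1)] by blast
  obtain pu where u: "rf pu (\<lambda>xs. Fu (xs ! 0) (xs ! 1)) (Suc (Suc 0))" using rf_comp2[OF assms(2)] by blast
  obtain pp where p: "rf pp (\<lambda>xs. Fp (xs ! 0) (xs ! 1)) (Suc (Suc 0))" using rf_comp2[OF assms(3)] by blast
  obtain pg where g: "rf pg (\<lambda>xs. G (xs ! 0) (xs ! 1)) (Suc (Suc 0))" using rf_comp2[OF assms(4)] by blast
  show ?thesis
    apply (rule rf_comp2_back)
    apply (rule rf_eq[OF rf_Cn2[OF rf_monus rf_const rf_Cn2[OF g
       rf_Cn2[OF i rf_Cn2[OF u rf_P0 rf_Cn1[OF rf_setC rf_P1]] rf_Cn1[OF rf_RI rf_P1]]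
       rf_Cn2[OF i rf_Cn2[OF u rf_Cn2[OF p rf_P0 rf_Z] rf_Cn1[OF rf_setA rf_P1]] rf_Cn1[OF rf_RE rf_P1]]]]])
     apply auto
    done
qed



section \<open>Piecewise testable languages: closure and invariance\<close>

lemma pt_sub: "piecewise_testable A S \<Longrightarrow> S \<subseteq> lists A"
  by (induction rule: piecewise_testable.induct) auto

lemma pt_all: "piecewise_testable A (lists A)"
proof -
  have "piecewise_testable A {w \<in> lists A. subseq [] w}" by (rule pt_basic) simp
  then show ?thesis by simp
qed

lemma pt_empty: "piecewise_testable A {}"
  using pt_compl[OF pt_all] by simp

lemma pt_inter: "piecewise_testable A S \<Longrightarrow> piecewise_testable A T \<Longrightarrow> piecewise_testable A (S \<inter> T)"
proof -
  assume s: "piecewise_testable A S" and t: "piecewise_testable A T"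
  have "piecewise_testable A (lists A - ((lists A - S) \<union> (lists A - T)))"
    by (intro pt_compl pt_union s t)
  moreover have "lists A - ((lists A - S) \<union> (lists A - T)) = S \<inter> T"
    using pt_sub[OF s] pt_sub[OF t] by blast
  ultimately show ?thesis by simp
qed

lemma pt_diff: "piecewise_testable A S \<Longrightarrow> piecewise_testable A T \<Longrightarrow> piecewise_testable A (S - T)"
proof -
  assume s: "piecewise_testable A S" and t: "piecewise_testable A T"
  have "piecewise_testable A (S \<inter> (lists A - T))" by (intro pt_inter pt_compl s t)
  moreover have "S \<inter> (lists A - T) = S - T" using pt_sub[OF s] by blast
  ultimately show ?thesis by simp
qed

lemma pt_UN: "finite F \<Longrightarrow> (\<And>i. i \<in> F \<Longrightarrow> piecewise_testable A (S i)) \<Longrightarrow> piecewise_testable A (\<Union>i\<in>F. S i)"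
  by (induction F rule: finite_induct) (auto intro: pt_empty pt_union)

lemma pt_inv: "piecewise_testable A S \<Longrightarrow> \<exists>K. \<forall>w w'. w \<in> lists A \<longrightarrow> w' \<in> lists A \<longrightarrow>
   (\<forall>y. length y \<le> K \<longrightarrow> (subseq y w \<longleftrightarrow> subseq y w')) \<longrightarrow> (w \<in> S \<longleftrightarrow> w' \<in> S)"
proof (induction rule: piecewise_testable.induct)
  case (pt_basic u)
  show ?case
  proof (intro exI[of _ "length u"] allI impI)
    fix w w' assume "w \<in> lists A" "w' \<in> lists A"
      and h: "\<forall>y. length y \<le> length u \<longrightarrow> (subseq y w \<longleftrightarrow> subseq y w')"
    then have "subseq u w \<longleftrightarrow> subseq u w'" by blast
    then show "w \<in> {w \<in> lists A. subseq u w} \<longleftrightarrow> w' \<in> {w \<in> lists A. subseq u w}"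
      using \<open>w \<in> lists A\<close> \<open>w' \<in> lists A\<close> by simp
  qed
next
  case (pt_compl S)
  then obtain K where k: "\<forall>w w'. w \<in> lists A \<longrightarrow> w' \<in> lists A \<longrightarrow>
   (\<forall>y. length y \<le> K \<longrightarrow> (subseq y w \<longleftrightarrow> subseq y w')) \<longrightarrow> (w \<in> S \<longleftrightarrow> w' \<in> S)" by blast
  show ?case
  proof (intro exI[of _ K] allI impI)
    fix w w' assume a: "w \<in> lists A" "w' \<in> lists A"
      and h: "\<forall>y. length y \<le> K \<longrightarrow> (subseq y w \<longleftrightarrow> subseq y w')"
    have "w \<in> S \<longleftrightarrow> w' \<in> S" using k a h by blast
    then show "w \<in> lists A - S \<longleftrightarrow> w' \<in> lists A - S" using a by blast
  qed
next
  case (pt_union S T)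
  then obtain K1 K2 where
    k1: "\<forall>w w'. w \<in> lists A \<longrightarrow> w' \<in> lists A \<longrightarrow>
   (\<forall>y. length y \<le> K1 \<longrightarrow> (subseq y w \<longleftrightarrow> subseq y w')) \<longrightarrow> (w \<in> S \<longleftrightarrow> w' \<in> S)"
   and k2: "\<forall>w w'. w \<in> lists A \<longrightarrow> w' \<in> lists A \<longrightarrow>
   (\<forall>y. length y \<le> K2 \<longrightarrow> (subseq y w \<longleftrightarrow> subseq y w')) \<longrightarrow> (w \<in> T \<longleftrightarrow> w' \<in> T)" by blast
  show ?case
  proof (intro exI[of _ "max K1 K2"] allI impI)
    fix w w' assume a: "w \<in> lists A" "w' \<in> lists A"
      and h: "\<forall>y. length y \<le> max K1 K2 \<longrightarrow> (subseq y w \<longleftrightarrow> subseq y w')"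
    have h1: "\<forall>y. length y \<le> K1 \<longrightarrow> (subseq y w \<longleftrightarrow> subseq y w')"
      using h by (meson le_trans max.cobounded1)
    have h2: "\<forall>y. length y \<le> K2 \<longrightarrow> (subseq y w \<longleftrightarrow> subseq y w')"
      using h by (meson le_trans max.cobounded2)
    have "w \<in> S \<longleftrightarrow> w' \<in> S" using k1 a h1 by blast
    moreover have "w \<in> T \<longleftrightarrow> w' \<in> T" using k2 a h2 by blast
    ultimately show "w \<in> S \<union> T \<longleftrightarrow> w' \<in> S \<union> T" by blast
  qed
qed

lemma count_list_filter: "P a \<Longrightarrow> count_list (filter P w) a = count_list w a"
  by (induction w) auto

lemma subseq_count: "subseq u w \<Longrightarrow> count_list u a \<le> count_list w a"
  by (induction rule: list_emb.induct) auto

lemma filter_eq_replicate: "filter ((=) a) w = replicate (count_list w a) a"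
  by (induction w) auto

lemma subseq_rep: "subseq (replicate j a) w \<longleftrightarrow> j \<le> count_list w a"
proof
  assume "subseq (replicate j a) w"
  then show "j \<le> count_list w a" using subseq_count[of "replicate j a" w a]
    by (simp add: count_list_eq_length_filter)
next
  assume j: "j \<le> count_list w a"
  have "subseq (replicate j a) (replicate (count_list w a) a)"
    using j by (metis le_add_diff_inverse replicate_add subseq_rev_drop_many subseq_order.order_refl)
  moreover have "subseq (replicate (count_list w a) a) w"
    using subseq_filter_left[of "(=) a" w] by (simp add: filter_eq_replicate)
  ultimately show "subseq (replicate j a) w" by (rule subseq_order.order_trans)
qed

lemma pt_count: "a \<in> A \<Longrightarrow> piecewise_testable A {w \<in> lists A. count_list w a = j}"
proof -
  assume a: "a \<in> A"
  have "piecewise_testable A ({w \<in> lists A. subseq (replicate j a) w} - {w \<in> lists A. subseq (replicate (Suc j) a) w})"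
    using a by (intro pt_diff pt_basic) auto
  moreover have "{w \<in> lists A. subseq (replicate j a) w} - {w \<in> lists A. subseq (replicate (Suc j) a) w}
     = {w \<in> lists A. count_list w a = j}"
    by (auto simp: subseq_rep simp del: replicate_Suc)
  ultimately show ?thesis by simp
qed

section \<open>Regular expressions used\<close>

lemma kstar_single: "kstar {u} = range (\<lambda>k. concat (replicate k u))"
proof
  show "kstar {u} \<subseteq> range (\<lambda>k. concat (replicate k u))"
  proof
    fix w assume "w \<in> kstar {u}"
    then show "w \<in> range (\<lambda>k. concat (replicate k u))"
    proof (induction rule: kstar.induct)
      case kstar_Nil then show ?case by (auto intro: range_eqI[of _ _ 0])
    next
      case (kstar_app v w)
      then obtain k where "w = concat (replicate k u)" by auto
      then show ?case using kstar_app by (auto intro: range_eqI[of _ _ "Suc k"])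
    qed
  qed
next
  show "range (\<lambda>k. concat (replicate k u)) \<subseteq> kstar {u}"
  proof
    fix w assume "w \<in> range (\<lambda>k. concat (replicate k u))"
    then obtain k where w: "w = concat (replicate k u)" by auto
    have "concat (replicate k u) \<in> kstar {u}"
      by (induction k) (auto intro: kstar.intros)
    then show "w \<in> kstar {u}" using w by simp
  qed
qed

definition gI :: "nat \<Rightarrow> nat \<Rightarrow> nat \<Rightarrow> nat list" where
  "gI b c k = concat (replicate k [b, c])"

lemma rlang_blkI: "rlang (blkI b c) = range (gI b c)"
  by (simp add: blkI_def conc_def kstar_single gI_def)

lemma rlang_blkE: "rlang (blkE b c) = range (\<lambda>k. gI b c k @ [b])"
  by (auto simp: blkE_def conc_def rlang_blkI)

lemma conc_blocks:
  "conc {concat (map (\<lambda>i. g i (k i)) [0..<j]) | k. True} (range (g j))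
    = {concat (map (\<lambda>i. g i (k i)) [0..<Suc j]) | k. True}"
proof
  show "conc {concat (map (\<lambda>i. g i (k i)) [0..<j]) | k. True} (range (g j))
    \<subseteq> {concat (map (\<lambda>i. g i (k i)) [0..<Suc j]) | k. True}"
  proof
    fix w assume "w \<in> conc {concat (map (\<lambda>i. g i (k i)) [0..<j]) | k. True} (range (g j))"
    then obtain k m where w: "w = concat (map (\<lambda>i. g i (k i)) [0..<j]) @ g j m"
      by (auto simp: conc_def)
    define k' where "k' = k(j := m)"
    have meq: "map (\<lambda>i. g i (k' i)) [0..<j] = map (\<lambda>i. g i (k i)) [0..<j]"
      by (rule map_cong) (auto simp: k'_def)
    have kj: "k' j = m" by (simp add: k'_def)
    have e: "concat (map (\<lambda>i. g i (k' i)) [0..<Suc j]) = concat (map (\<lambda>i. g i (k' i)) [0..<j]) @ g j (k' j)"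
      by simp
    have "w = concat (map (\<lambda>i. g i (k' i)) [0..<Suc j])" by (simp only: e meq kj w)
    then show "w \<in> {concat (map (\<lambda>i. g i (k i)) [0..<Suc j]) | k. True}" by blast
  qed
next
  show "{concat (map (\<lambda>i. g i (k i)) [0..<Suc j]) | k. True}
     \<subseteq> conc {concat (map (\<lambda>i. g i (k i)) [0..<j]) | k. True} (range (g j))"
    by (auto simp: conc_def)
qed

lemma rlang_RIx: "rlang (RIx x f j) = {concat (map (\<lambda>i. gI (f i) (x + i) (k i)) [0..<j]) | k. True}"
proof (induction j)
  case 0 then show ?case by simp
next
  case (Suc j)
  show ?case using conc_blocks[of "\<lambda>i. gI (f i) (x + i)" j] Suc
    by (simp add: rlang_blkI del: upt_Suc)
qed

lemma rlang_REx: "rlang (REx x f j) = {concat (map (\<lambda>i. gI (f i) (x + i) (k i) @ [f i]) [0..<j]) | k. True}"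
proof (induction j)
  case 0 then show ?case by simp
next
  case (Suc j)
  show ?case using conc_blocks[of "\<lambda>i m. gI (f i) (x + i) m @ [f i]" j] Suc
    by (simp add: rlang_blkE del: upt_Suc)
qed

lemma RIx_cong: "(\<And>i. i < j \<Longrightarrow> f i = g i) \<Longrightarrow> RIx x f j = RIx x g j"
  by (induction j) auto

lemma REx_cong: "(\<And>i. i < j \<Longrightarrow> f i = g i) \<Longrightarrow> REx x f j = REx x g j"
  by (induction j) auto


lemma count_concat_upt: "count_list (concat (map h [0..<j])) a = (\<Sum>i<j. count_list (h i) a)"
  by (induction j) auto

lemma count_gI: "count_list (gI b c m) a = m * ((if b = a then 1 else 0) + (if c = a then 1 else 0))"
  by (induction m) (auto simp: gI_def)

lemma bs_lt: "b \<in> set bs \<Longrightarrow> b < list_encode bs"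
proof (induction bs)
  case Nil then show ?case by simp
next
  case (Cons a r)
  have "a \<le> prod_encode (a, list_encode r)" "list_encode r \<le> prod_encode (a, list_encode r)"
    by (rule le_prod_encode_1, rule le_prod_encode_2)
  then show ?case using Cons by auto
qed

lemma nth_lt: "i < length bs \<Longrightarrow> bs ! i < list_encode bs"
  by (rule bs_lt) simp

lemma cnt_I:
  assumes "distinct bs" "i < length bs"
  shows "count_list (concat (map (\<lambda>i. gI (bs ! i) (list_encode bs + i) (k i)) [0..<length bs])) (bs ! i) = k i"
    and "count_list (concat (map (\<lambda>i. gI (bs ! i) (list_encode bs + i) (k i)) [0..<length bs])) (list_encode bs + i) = k i"
proof -
  have lt: "\<And>j. j < length bs \<Longrightarrow> bs ! j < list_encode bs" by (rule nth_lt)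
  have "(\<Sum>j<length bs. count_list (gI (bs ! j) (list_encode bs + j) (k j)) (bs ! i))
      = (\<Sum>j<length bs. if j = i then k j else 0)"
  proof (rule sum.cong)
    fix j assume "j \<in> {..<length bs}"
    then have j: "j < length bs" by simp
    have "(bs ! j = bs ! i) = (j = i)" using assms j by (simp add: nth_eq_iff_index_eq)
    moreover have "list_encode bs + j \<noteq> bs ! i" using lt[OF assms(2)] by simp
    ultimately show "count_list (gI (bs ! j) (list_encode bs + j) (k j)) (bs ! i) = (if j = i then k j else 0)"
      by (simp add: count_gI)
  qed simp
  then show "count_list (concat (map (\<lambda>i. gI (bs ! i) (list_encode bs + i) (k i)) [0..<length bs])) (bs ! i) = k i"
    using assms by (simp add: count_concat_upt)
  have "(\<Sum>j<length bs. count_list (gI (bs ! j) (list_encode bs + j) (k j)) (list_encode bs + i))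
      = (\<Sum>j<length bs. if j = i then k j else 0)"
  proof (rule sum.cong)
    fix j assume "j \<in> {..<length bs}"
    then have j: "j < length bs" by simp
    have "bs ! j \<noteq> list_encode bs + i" using lt[OF j] by simp
    then show "count_list (gI (bs ! j) (list_encode bs + j) (k j)) (list_encode bs + i) = (if j = i then k j else 0)"
      by (simp add: count_gI)
  qed simp
  then show "count_list (concat (map (\<lambda>i. gI (bs ! i) (list_encode bs + i) (k i)) [0..<length bs])) (list_encode bs + i) = k i"
    using assms by (simp add: count_concat_upt)
qed

lemma cnt_E:
  assumes "distinct bs" "i < length bs"
  shows "count_list (concat (map (\<lambda>i. gI (bs ! i) (list_encode bs + i) (k i) @ [bs ! i]) [0..<length bs])) (bs ! i) = Suc (k i)"
    and "count_list (concat (map (\<lambda>i. gI (bs ! i) (list_encode bs + i) (k i) @ [bs ! i]) [0..<length bs])) (list_encode bs + i) = k i"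
proof -
  have lt: "\<And>j. j < length bs \<Longrightarrow> bs ! j < list_encode bs" by (rule nth_lt)
  have "(\<Sum>j<length bs. count_list (gI (bs ! j) (list_encode bs + j) (k j) @ [bs ! j]) (bs ! i))
      = (\<Sum>j<length bs. if j = i then Suc (k j) else 0)"
  proof (rule sum.cong)
    fix j assume "j \<in> {..<length bs}"
    then have j: "j < length bs" by simp
    have "(bs ! j = bs ! i) = (j = i)" using assms j by (simp add: nth_eq_iff_index_eq)
    moreover have "list_encode bs + j \<noteq> bs ! i" using lt[OF assms(2)] by simp
    ultimately show "count_list (gI (bs ! j) (list_encode bs + j) (k j) @ [bs ! j]) (bs ! i) = (if j = i then Suc (k j) else 0)"
      by (simp add: count_gI)
  qed simp
  then show "count_list (concat (map (\<lambda>i. gI (bs ! i) (list_encode bs + i) (k i) @ [bs ! i]) [0..<length bs])) (bs ! i) = Suc (k i)"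
    using assms by (simp add: count_concat_upt)
  have "(\<Sum>j<length bs. count_list (gI (bs ! j) (list_encode bs + j) (k j) @ [bs ! j]) (list_encode bs + i))
      = (\<Sum>j<length bs. if j = i then k j else 0)"
  proof (rule sum.cong)
    fix j assume "j \<in> {..<length bs}"
    then have j: "j < length bs" by simp
    have "bs ! j \<noteq> list_encode bs + i" using lt[OF j] by simp
    then show "count_list (gI (bs ! j) (list_encode bs + j) (k j) @ [bs ! j]) (list_encode bs + i) = (if j = i then k j else 0)"
      by (simp add: count_gI)
  qed simp
  then show "count_list (concat (map (\<lambda>i. gI (bs ! i) (list_encode bs + i) (k i) @ [bs ! i]) [0..<length bs])) (list_encode bs + i) = k i"
    using assms by (simp add: count_concat_upt)
qed


lemma bounded_form: "length ks = length bs \<Longrightarrow>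
  concat (map (\<lambda>(b, k). replicate k b) (zip bs ks)) = concat (map (\<lambda>i. replicate (ks ! i) (bs ! i)) [0..<length bs])"
  by (rule arg_cong[where f=concat], rule nth_equalityI) auto

lemma count_replicate: "count_list (replicate m b) a = (if b = a then m else 0)"
  by (induction m) auto

lemma cnt_bounded:
  assumes "distinct bs" "i < length bs"
  shows "count_list (concat (map (\<lambda>i. replicate (ks ! i) (bs ! i)) [0..<length bs])) (bs ! i) = ks ! i"
proof -
  have "(\<Sum>j<length bs. count_list (replicate (ks ! j) (bs ! j)) (bs ! i)) = (\<Sum>j<length bs. if j = i then ks ! j else 0)"
  proof (rule sum.cong)
    fix j assume "j \<in> {..<length bs}"
    then have j: "j < length bs" by simp
    have "(bs ! j = bs ! i) = (j = i)" using assms j by (simp add: nth_eq_iff_index_eq)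
    then show "count_list (replicate (ks ! j) (bs ! j)) (bs ! i) = (if j = i then ks ! j else 0)"
      by (simp add: count_replicate)
  qed simp
  then show ?thesis using assms by (simp add: count_concat_upt)
qed

lemma set_bounded: "w \<in> bounded_lang bs \<Longrightarrow> set w \<subseteq> set bs"
  by (auto simp: bounded_lang_def dest: set_zip_leftD)

section \<open>Subwords of block words\<close>

lemma rep_pair: "set z \<subseteq> {b, c} \<Longrightarrow> length z \<le> k \<Longrightarrow> subseq z (gI b c k)"
proof (induction z arbitrary: k)
  case Nil then show ?case by simp
next
  case (Cons a z)
  then obtain k' where k: "k = Suc k'" by (cases k) auto
  have ih: "subseq z (gI b c k')" using Cons k by auto
  have g: "gI b c k = b # c # gI b c k'" by (simp add: gI_def k)
  show ?case
  proof (cases "a = b")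
    case True
    then show ?thesis using ih g by auto
  next
    case False
    then have "a = c" using Cons by auto
    then show ?thesis using ih g by auto
  qed
qed

lemma gI_mono: "k \<le> k' \<Longrightarrow> subseq (gI b c k) (gI b c k')"
proof -
  assume "k \<le> k'"
  then have "gI b c k' = gI b c k @ gI b c (k' - k)"
    by (metis concat_append gI_def le_add_diff_inverse replicate_add)
  then show ?thesis by (metis subseq_rev_drop_many subseq_order.order_refl)
qed

lemma set_gI: "set (gI b c k) \<subseteq> {b, c}"
  by (auto simp: gI_def)

lemma subseq_set: "subseq y w \<Longrightarrow> set y \<subseteq> set w"
  by (auto elim: list_emb_set)

lemma blocks_subseq:
  assumes "\<And>i. i < n \<Longrightarrow> set (X i) \<subseteq> Sig i"
    and "\<And>i z. i < n \<Longrightarrow> set z \<subseteq> Sig i \<Longrightarrow> length z \<le> K \<Longrightarrow> subseq z (Y i)"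
  shows "subseq y (concat (map X [0..<n])) \<Longrightarrow> length y \<le> K \<Longrightarrow> subseq y (concat (map Y [0..<n]))"
  using assms
proof (induction n arbitrary: y)
  case 0 then show ?case by simp
next
  case (Suc n)
  from Suc.prems(1) have "subseq y (concat (map X [0..<n]) @ X n)" by simp
  then obtain y1 y2 where y: "y = y1 @ y2" and s1: "subseq y1 (concat (map X [0..<n]))" and s2: "subseq y2 (X n)"
    by (rule subseq_appendE)
  have "subseq y1 (concat (map Y [0..<n]))"
    using Suc.IH[OF s1] Suc.prems y by auto
  moreover have "subseq y2 (Y n)"
  proof (rule Suc.prems(4))
    show "set y2 \<subseteq> Sig n" using subseq_set[OF s2] Suc.prems(3)[of n] by auto
    show "length y2 \<le> K" using Suc.prems(2) y by simp
  qed simp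
  ultimately have "subseq (y1 @ y2) (concat (map Y [0..<n]) @ Y n)" by (rule list_emb_append_mono)
  then show ?case using y by simp
qed

lemma filter_gI: "b \<notin> C \<Longrightarrow> c \<in> C \<Longrightarrow> filter (\<lambda>a. a \<notin> C) (gI b c m) = replicate m b"
  by (induction m) (auto simp: gI_def)


section \<open>The reduction\<close>

lemma reduction:
  assumes dist: "distinct bs" and Lb: "L \<subseteq> bounded_lang bs"
  shows "PTL_separable
     (upclose {list_encode bs..<list_encode bs + length bs} L \<inter> rlang (RIx (list_encode bs) (\<lambda>i. bs ! i) (length bs)))
     (upclose {..<list_encode bs + length bs} (proj {} L) \<inter> rlang (REx (list_encode bs) (\<lambda>i. bs ! i) (length bs)))
   \<longleftrightarrow> \<not> simult_unbounded bs L"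
proof -
  define x where "x = list_encode bs"
  define n where "n = length bs"
  define C where "C = {x..<x + n}"
  define I where "I = upclose C L \<inter> rlang (RIx x (\<lambda>i. bs ! i) n)"
  define E where "E = upclose {..<x + n} (proj {} L) \<inter> rlang (REx x (\<lambda>i. bs ! i) n)"
  have lt: "\<And>i. i < n \<Longrightarrow> bs ! i < x" unfolding x_def n_def by (rule nth_lt)
  have bsC: "\<And>i. i < n \<Longrightarrow> bs ! i \<notin> C" unfolding C_def by (metis atLeastLessThan_iff lt not_le)
  have xC: "\<And>i. i < n \<Longrightarrow> x + i \<in> C" unfolding C_def by auto
  have setbs: "\<And>a. a \<in> set bs \<Longrightarrow> a < x" unfolding x_def by (rule bs_lt)
  have I_def': "I = upclose C L \<inter> {concat (map (\<lambda>i. gI (bs ! i) (x + i) (k i)) [0..<n]) | k. True}"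
    unfolding I_def by (simp add: rlang_RIx)
  have E_def': "E = upclose {..<x + n} (proj {} L) \<inter> {concat (map (\<lambda>i. gI (bs ! i) (x + i) (k i) @ [bs ! i]) [0..<n]) | k. True}"
    unfolding E_def by (simp add: rlang_REx)
  have "PTL_separable I E \<longleftrightarrow> \<not> simult_unbounded bs L"
  proof
    assume sep: "PTL_separable I E"
    show "\<not> simult_unbounded bs L"
    proof
      assume sup: "simult_unbounded bs L"
      from sep obtain A S where fA: "finite A" and pt: "piecewise_testable A S" and IS: "I \<subseteq> S"
        and SE: "S \<inter> E = {}" unfolding PTL_separable_def by blast
      obtain K where K: "\<forall>w w'. w \<in> lists A \<longrightarrow> w' \<in> lists A \<longrightarrow>
         (\<forall>y. length y \<le> K \<longrightarrow> (subseq y w \<longleftrightarrow> subseq y w')) \<longrightarrow> (w \<in> S \<longleftrightarrow> w' \<in> S)"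
        using pt_inv[OF pt] by blast
      define K' where "K' = max K 1"
      obtain u where uL: "u \<in> L" and ucnt: "\<forall>i<n. K' \<le> count_list u (bs ! i)"
        using sup unfolding simult_unbounded_def n_def by blast
      obtain ks where ks: "length ks = n" and u: "u = concat (map (\<lambda>i. replicate (ks ! i) (bs ! i)) [0..<n])"
        using Lb uL bounded_form unfolding bounded_lang_def n_def by fastforce
      have ksK: "\<And>i. i < n \<Longrightarrow> K' \<le> ks ! i"
        using ucnt cnt_bounded[OF dist] u unfolding n_def by metis
      define w where "w = concat (map (\<lambda>i. gI (bs ! i) (x + i) (ks ! i)) [0..<n])"
      define v where "v = concat (map (\<lambda>i. gI (bs ! i) (x + i) K' @ [bs ! i]) [0..<n])"
      have "filter (\<lambda>a. a \<notin> C) w = concat (map (\<lambda>i. filter (\<lambda>a. a \<notin> C) (gI (bs ! i) (x + i) (ks ! i))) [0..<n])"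
        unfolding w_def by (simp add: filter_concat comp_def)
      also have "\<dots> = u" unfolding u
        by (rule arg_cong[where f=concat], rule map_cong) (auto simp: filter_gI bsC xC)
      finally have fw: "filter (\<lambda>a. a \<notin> C) w = u" .
      have "w \<in> upclose C L"
        unfolding upclose_def
      proof (intro CollectI bexI)
        show "u \<in> L" by (rule uL)
        show "filter (\<lambda>a. \<not> a \<notin> C) w \<in> lists C" by auto
        show "w \<in> shuffles u (filter (\<lambda>a. \<not> a \<notin> C) w)"
          using partition_in_shuffles[of w "\<lambda>a. a \<notin> C"] fw by simp
      qed
      moreover have "w \<in> {concat (map (\<lambda>i. gI (bs ! i) (x + i) (k i)) [0..<n]) | k. True}"
        unfolding w_def by blast
      ultimately have wI: "w \<in> I" unfolding I_def' by blast
      have pL: "proj {} L = {[]}" using uL unfolding proj_def by auto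
      have vlet: "set v \<subseteq> {..<x + n}"
      proof
        fix a assume "a \<in> set v"
        then obtain i where i: "i < n" and "a \<in> set (gI (bs ! i) (x + i) K' @ [bs ! i])"
          unfolding v_def by auto
        then have "a = bs ! i \<or> a = x + i" using set_gI by auto
        then show "a \<in> {..<x + n}" using lt[OF i] i by auto
      qed
      have "v \<in> upclose {..<x + n} (proj {} L)"
        unfolding upclose_def pL using vlet by auto
      moreover have "v \<in> {concat (map (\<lambda>i. gI (bs ! i) (x + i) (k i) @ [bs ! i]) [0..<n]) | k. True}"
        unfolding v_def by (intro CollectI exI[of _ "\<lambda>_. K'"]) simp
      ultimately have vE: "v \<in> E" unfolding E_def' by blast
      have agree: "\<forall>y. length y \<le> K' \<longrightarrow> (subseq y w \<longleftrightarrow> subseq y v)"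
      proof (intro allI impI iffI)
        fix y :: "nat list" assume ly: "length y \<le> K'"
        have X1: "\<And>i. i < n \<Longrightarrow> set (gI (bs ! i) (x + i) (ks ! i)) \<subseteq> {bs ! i, x + i}" by (rule set_gI)
        have Y1: "\<And>i z. i < n \<Longrightarrow> set z \<subseteq> {bs ! i, x + i} \<Longrightarrow> length z \<le> K' \<Longrightarrow>
                subseq z (gI (bs ! i) (x + i) K' @ [bs ! i])"
          by (rule subseq_rev_drop_many, rule rep_pair)
        have X2: "\<And>i. i < n \<Longrightarrow> set (gI (bs ! i) (x + i) K' @ [bs ! i]) \<subseteq> {bs ! i, x + i}"
          using set_gI by auto
        have Y2: "\<And>i z. i < n \<Longrightarrow> set z \<subseteq> {bs ! i, x + i} \<Longrightarrow> length z \<le> K' \<Longrightarrow>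
                subseq z (gI (bs ! i) (x + i) (ks ! i))"
          using ksK by (meson le_trans rep_pair)
        {
          assume "subseq y w"
          then have sw: "subseq y (concat (map (\<lambda>i. gI (bs ! i) (x + i) (ks ! i)) [0..<n]))" by (simp add: w_def)
          show "subseq y v" unfolding v_def by (rule blocks_subseq[OF X1 Y1 sw ly])
        }
        {
          assume "subseq y v"
          then have sv: "subseq y (concat (map (\<lambda>i. gI (bs ! i) (x + i) K' @ [bs ! i]) [0..<n]))" by (simp add: v_def)
          show "subseq y w" unfolding w_def by (rule blocks_subseq[OF X2 Y2 sv ly])
        }
      qed
      have wS: "w \<in> S" using wI IS by blast
      then have wA: "w \<in> lists A" using pt_sub[OF pt] by blast
      have vA: "v \<in> lists A"
      proof -
        have "set v \<subseteq> set w"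
        proof
          fix a assume "a \<in> set v"
          then have "subseq [a] v" by (simp add: subseq_singleton_left)
          then have "subseq [a] w" using agree unfolding K'_def by simp
          then show "a \<in> set w" by (simp add: subseq_singleton_left)
        qed
        then show ?thesis using wA by auto
      qed
      have "\<forall>y. length y \<le> K \<longrightarrow> (subseq y w \<longleftrightarrow> subseq y v)"
        using agree unfolding K'_def by simp
      then have "v \<in> S" using K wA vA wS by blast
      then show False using vE SE by blast
    qed
  next
    assume nsup: "\<not> simult_unbounded bs L"
    then obtain m0 where m0: "\<forall>u\<in>L. \<exists>i<n. count_list u (bs ! i) < m0"
      unfolding simult_unbounded_def n_def by (auto simp: not_le)
    define A where "A = {..<x + n}"
    define S where "S = (\<Union>i\<in>{..<n}. \<Union>j\<in>{..<m0}.
       {w \<in> lists A. count_list w (bs ! i) = j} \<inter> {w \<in> lists A. count_list w (x + i) = j})"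
    have ptS: "piecewise_testable A S" unfolding S_def
    proof (intro pt_UN pt_inter pt_count)
      fix i assume "i \<in> {..<n}"
      then have i: "i < n" by simp
      show "bs ! i \<in> A" using lt[OF i] unfolding A_def by simp
      show "x + i \<in> A" using i unfolding A_def by simp
    qed simp_all
    have IS: "I \<subseteq> S"
    proof
      fix w assume "w \<in> I"
      then obtain k where wu: "w \<in> upclose C L" and w: "w = concat (map (\<lambda>i. gI (bs ! i) (x + i) (k i)) [0..<n])"
        unfolding I_def' by blast
      from wu obtain u v where uL: "u \<in> L" and vC: "v \<in> lists C" and sh: "w \<in> shuffles u v"
        unfolding upclose_def by blast
      have "filter (\<lambda>a. a \<notin> C) w \<in> shuffles (filter (\<lambda>a. a \<notin> C) u) (filter (\<lambda>a. a \<notin> C) v)"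
        using sh filter_shuffles[of "\<lambda>a. a \<notin> C" u v] by blast
      moreover have "filter (\<lambda>a. a \<notin> C) u = u"
      proof (rule filter_True)
        show "\<forall>a\<in>set u. a \<notin> C"
          using set_bounded[of u bs] Lb uL setbs unfolding C_def by fastforce
      qed
      moreover have "filter (\<lambda>a. a \<notin> C) v = []" using vC by (induction v) auto
      ultimately have fw: "filter (\<lambda>a. a \<notin> C) w = u" by simp
      obtain i where i: "i < n" and ic: "count_list u (bs ! i) < m0" using m0 uL by blast
      have c1: "count_list w (bs ! i) = count_list u (bs ! i)"
        using count_list_filter[of "\<lambda>a. a \<notin> C" "bs ! i" w] fw bsC[OF i] by simp
      have c2: "count_list w (bs ! i) = k i" "count_list w (x + i) = k i"
        using cnt_I[OF dist, of i k] i unfolding w x_def n_def by auto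
      have wA: "w \<in> lists A"
      proof -
        have "set w \<subseteq> A"
        proof
          fix a assume "a \<in> set w"
          then obtain j where j: "j < n" and "a \<in> set (gI (bs ! j) (x + j) (k j))" unfolding w by auto
          then have "a = bs ! j \<or> a = x + j" using set_gI by auto
          then show "a \<in> A" using lt[OF j] j unfolding A_def by auto
        qed
        then show ?thesis by auto
      qed
      have "w \<in> {w \<in> lists A. count_list w (bs ! i) = count_list u (bs ! i)} \<inter>
                 {w \<in> lists A. count_list w (x + i) = count_list u (bs ! i)}"
        using c1 c2 wA by simp
      then show "w \<in> S" unfolding S_def using i ic by blast
    qed
    have SE: "S \<inter> E = {}"
    proof (rule ccontr)
      assume "S \<inter> E \<noteq> {}"
      then obtain w where wS: "w \<in> S" and wE: "w \<in> E" by blast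
      from wE obtain k where w: "w = concat (map (\<lambda>i. gI (bs ! i) (x + i) (k i) @ [bs ! i]) [0..<n])"
        unfolding E_def' by blast
      from wS obtain i j where i: "i < n" and "count_list w (bs ! i) = j" "count_list w (x + i) = j"
        unfolding S_def by blast
      moreover have "count_list w (bs ! i) = Suc (k i)" "count_list w (x + i) = k i"
        using cnt_E[OF dist, of i k] i unfolding w x_def n_def by auto
      ultimately show False by simp
    qed
    show "PTL_separable I E" unfolding PTL_separable_def
      using ptS IS SE by (intro exI[of _ A] exI[of _ S]) (auto simp: A_def)
  qed
  then show ?thesis unfolding I_def E_def C_def x_def n_def .
qed


lemma set_encode_Ico: "set_encode {x..<x + n} = 2 ^ (x + n) - 2 ^ x"
proof (induction n)
  case 0 then show ?case by simp
next
  case (Suc n)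
  have "{x..<x + Suc n} = insert (x + n) {x..<x + n}" by auto
  moreover have "(2::nat) ^ x \<le> 2 ^ (x + n)" by (simp add: power_increasing)
  ultimately show ?case using Suc by simp
qed

lemma set_encode_lessThan: "set_encode {..<N} = 2 ^ N - 1"
proof (induction N)
  case 0 then show ?case by simp
next
  case (Suc N)
  have "{..<Suc N} = insert N {..<N}" by auto
  moreover have "(1::nat) \<le> 2 ^ N" by simp
  ultimately show ?case using Suc by simp
qed

theorem lemma4p4:
  fixes D :: "nat set" and sem :: "nat \<Rightarrow> nat list set"
  assumes "full_trio D sem"
    and "PTL_separability_decidable D sem"
  shows "SUP_decidable D sem"
proof -
  from assms(1) obtain Fp Fu Fi where
    cp: "computable2 Fp" and hp: "\<forall>d\<in>D. \<forall>B. finite B \<longrightarrow>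
          Fp d (set_encode B) \<in> D \<and> sem (Fp d (set_encode B)) = proj B (sem d)"
    and cu: "computable2 Fu" and hu: "\<forall>d\<in>D. \<forall>B. finite B \<longrightarrow>
          Fu d (set_encode B) \<in> D \<and> sem (Fu d (set_encode B)) = upclose B (sem d)"
    and ci: "computable2 Fi" and hi: "\<forall>d\<in>D. \<forall>r.
          Fi d (rexp_encode r) \<in> D \<and> sem (Fi d (rexp_encode r)) = sem d \<inter> rlang r"
    unfolding full_trio_def by (elim conjE exE) blast
  from assms(2) obtain G where cg: "computable2 G" and hg: "\<forall>d1\<in>D. \<forall>d2\<in>D.
        G d1 d2 = (if PTL_separable (sem d1) (sem d2) then 1 else 0)"
    unfolding PTL_separability_decidable_def by blast
  define f where "f = (\<lambda>d x. 1 - G (Fi (Fu d (2 ^ (x + lenf x) - 2 ^ x)) (rexp_encode (RIx x (nthf x) (lenf x))))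
                            (Fi (Fu (Fp d 0) (2 ^ (x + lenf x) - 1)) (rexp_encode (REx x (nthf x) (lenf x)))))"
  have cf: "computable2 f" unfolding f_def by (rule main_computable[OF ci cu cp cg])
  show ?thesis unfolding SUP_decidable_def
  proof (intro exI[of _ f] conjI cf ballI allI impI)
    fix d bs assume dD: "d \<in> D" and dist: "distinct bs" and Lb: "sem d \<subseteq> bounded_lang bs"
    define x where "x = list_encode bs"
    define n where "n = length bs"
    have len: "lenf x = n" unfolding x_def n_def by (rule len_enc)
    have RI: "RIx x (nthf x) n = RIx x (\<lambda>i. bs ! i) n"
      by (rule RIx_cong) (simp add: nthf_def x_def n_def nth_enc)
    have RE: "REx x (nthf x) n = REx x (\<lambda>i. bs ! i) n"
      by (rule REx_cong) (simp add: nthf_def x_def n_def nth_enc)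
    define d1 where "d1 = Fu d (set_encode {x..<x + n})"
    have d1: "d1 \<in> D" "sem d1 = upclose {x..<x + n} (sem d)" using hu[rule_format, OF dD, of "{x..<x + n}"] unfolding d1_def by simp_all
    define e1 where "e1 = Fi d1 (rexp_encode (RIx x (\<lambda>i. bs ! i) n))"
    have e1: "e1 \<in> D" "sem e1 = upclose {x..<x + n} (sem d) \<inter> rlang (RIx x (\<lambda>i. bs ! i) n)"
      using hi[rule_format, OF d1(1), of "RIx x (\<lambda>i. bs ! i) n"] d1(2) unfolding e1_def by simp_all
    define dp where "dp = Fp d (set_encode {})"
    have dp: "dp \<in> D" "sem dp = proj {} (sem d)" using hp[rule_format, OF dD, of "{}"] unfolding dp_def by simp_all
    define dq where "dq = Fu dp (set_encode {..<x + n})"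
    have dq: "dq \<in> D" "sem dq = upclose {..<x + n} (proj {} (sem d))" using hu[rule_format, OF dp(1), of "{..<x + n}"] dp(2) unfolding dq_def by simp_all
    define e2 where "e2 = Fi dq (rexp_encode (REx x (\<lambda>i. bs ! i) n))"
    have e2: "e2 \<in> D" "sem e2 = upclose {..<x + n} (proj {} (sem d)) \<inter> rlang (REx x (\<lambda>i. bs ! i) n)"
      using hi[rule_format, OF dq(1), of "REx x (\<lambda>i. bs ! i) n"] dq(2) unfolding e2_def by simp_all
    have fval: "f d x = 1 - G e1 e2"
      unfolding f_def e1_def e2_def d1_def dq_def dp_def
      by (simp add: len RI RE set_encode_Ico set_encode_lessThan)
    have "G e1 e2 = (if PTL_separable (sem e1) (sem e2) then 1 else 0)" using hg e1 e2 by blast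
    moreover have "PTL_separable (sem e1) (sem e2) \<longleftrightarrow> \<not> simult_unbounded bs (sem d)"
      unfolding e1 e2 x_def n_def by (rule reduction[OF dist Lb])
    ultimately show "f d (list_encode bs) = (if simult_unbounded bs (sem d) then 1 else 0)"
      using fval unfolding x_def by simp
  qed
qed

end
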